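(* Let $q\ge 2$ and $0\le\rho<1-1/q$, and let $\gamma>0$. Then for all sufficiently large $n$ the following holds. Let $C\subseteq\{0,\dots,q-1\}^n$ be a code of rate $1-H_q(\rho)+\gamma$. Then there exists a codeword $c\in C$ such that for at least a $1-q^{-\Omega(\gamma n)}$ fraction of error patterns $e\in\{0,\dots,q-1\}^n$ of Hamming weight at most $\rho n$, the Hamming ball of radius $\rho n$ around $c+e$ contains at least two codewords of $C$.
   Context: $H_q(x)=x\log_q(q-1)-x\log_q x-(1-x)\log_q(1-x)$ is the $q$-ary entropy function. A code $C\subseteq\Sigma^n$ with $|\Sigma|=q$ has rate $\log_q|C|/n$. Addition $c+e$ is coordinatewise (e.g. modulo $q$). The Hamming weight of a vector is its number of nonzero coordinates, and the Hamming ball of radius $r$ around $y$ is the set of vectors differing from $y$ in at most $r$ coordinates. *)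

theory Defs
  imports Complex_Main
begin

definition Hq :: "nat \<Rightarrow> real \<Rightarrow> real" where
  "Hq q x = x * log q (real q - 1) - x * log q x - (1 - x) * log q (1 - x)"

definition words :: "nat \<Rightarrow> nat \<Rightarrow> nat list set" where
  "words q n = {xs. length xs = n \<and> set xs \<subseteq> {..<q}}"

definition vadd :: "nat \<Rightarrow> nat list \<Rightarrow> nat list \<Rightarrow> nat list" where
  "vadd q xs ys = map2 (\<lambda>a b. (a + b) mod q) xs ys"

definition hweight :: "nat list \<Rightarrow> nat" where
  "hweight xs = card {i. i < length xs \<and> xs ! i \<noteq> 0}"

definition hdist :: "nat list \<Rightarrow> nat list \<Rightarrow> nat" where
  "hdist xs ys = card {i. i < length xs \<and> xs ! i \<noteq> ys ! i}"

definition hball :: "nat \<Rightarrow> nat \<Rightarrow> nat list \<Rightarrow> real \<Rightarrow> nat list set" where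
  "hball q n y r = {x \<in> words q n. real (hdist x y) \<le> r}"

definition code_rate :: "nat \<Rightarrow> nat \<Rightarrow> nat list set \<Rightarrow> real" where
  "code_rate q n C = log q (real (card C)) / real n"

end

theory Submission imports Defs begin

lemma words_finite: "finite (words q n)"
  unfolding words_def using finite_lists_length_eq[of "{..<q}" n] by (simp add: conj_commute)

lemma words_card: "card (words q n) = q ^ n"
  unfolding words_def using card_lists_length_eq[of "{..<q}" n] by (simp add: conj_commute)

lemma hweight_eq: "hweight xs = length (filter (\<lambda>x. x \<noteq> 0) xs)"
  unfolding hweight_def by (simp add: length_filter_conv_card)

lemma hweight_Cons: "hweight (x # xs) = (if x = 0 then 0 else 1) + hweight xs"
  by (simp add: hweight_eq)

lemma words_Suc: "words q (Suc n) = (\<lambda>(x, xs). x # xs) ` ({..<q} \<times> words q n)"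
  unfolding words_def
  apply (auto simp: length_Suc_conv image_iff)
  done

lemma mod_add_ne: "(a::nat) < q \<Longrightarrow> e < q \<Longrightarrow> ((a + e) mod q = a) \<longleftrightarrow> e = 0"
proof -
  assume h: "a < q" "e < q"
  show ?thesis
  proof (cases "a + e < q")
    case True then show ?thesis by auto
  next
    case False
    then have "(a + e) mod q = a + e - q" using h by (simp add: mod_if le_mod_geq)
    then show ?thesis using h False by auto
  qed
qed

lemma mod_add_inj: assumes "((a::nat) + x) mod q = (a + y) mod q" "a < q" "x < q" "y < q"
  shows "x = y"
proof -
  have "((a + x) mod q + (q - a)) mod q = ((a + y) mod q + (q - a)) mod q" using assms(1) by simp
  then have "(a + x + (q - a)) mod q = (a + y + (q - a)) mod q" by (simp only: mod_add_left_eq)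
  moreover have "a + x + (q - a) = x + q" "a + y + (q - a) = y + q" using assms(2) by simp_all
  ultimately have "(x + q) mod q = (y + q) mod q" by simp
  then show ?thesis using assms(3,4) by simp
qed

lemma vadd_nth: "i < length c \<Longrightarrow> length e = length c \<Longrightarrow> vadd q c e ! i = (c ! i + e ! i) mod q"
  unfolding vadd_def by simp

lemma vadd_words: "q > 0 \<Longrightarrow> c \<in> words q n \<Longrightarrow> e \<in> words q n \<Longrightarrow> vadd q c e \<in> words q n"
  unfolding words_def vadd_def by (auto dest!: set_zip_rightD set_zip_leftD)

lemma hdist_vadd: assumes "c \<in> words q n" "e \<in> words q n"
  shows "hdist (vadd q c e) c = hweight e"
proof -
  have lc: "length c = n" and le: "length e = n" and sc: "set c \<subseteq> {..<q}" and se: "set e \<subseteq> {..<q}"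
    using assms by (auto simp: words_def)
  have "{i. i < length (vadd q c e) \<and> vadd q c e ! i \<noteq> c ! i} = {i. i < length e \<and> e ! i \<noteq> 0}"
  proof (intro Collect_cong conj_cong)
    fix i show "(i < length (vadd q c e)) = (i < length e)" using lc le by (simp add: vadd_def)
    assume "i < length e"
    then have "c ! i \<in> set c" "e ! i \<in> set e" using lc le by simp_all
    then have "c ! i < q" "e ! i < q" using sc se by blast+
    then show "(vadd q c e ! i \<noteq> c ! i) = (e ! i \<noteq> 0)"
      using \<open>i < length e\<close> lc le by (simp add: vadd_nth mod_add_ne)
  qed
  then show ?thesis unfolding hdist_def hweight_def by simp
qed

lemma vadd_cancel: assumes "c \<in> words q n" "e \<in> words q n" "e' \<in> words q n" "vadd q c e = vadd q c e'"
  shows "e = e'"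
proof (rule nth_equalityI)
  have lc: "length c = n" and le: "length e = n" and le': "length e' = n"
    and sc: "set c \<subseteq> {..<q}" and se: "set e \<subseteq> {..<q}" and se': "set e' \<subseteq> {..<q}"
    using assms by (auto simp: words_def)
  show "length e = length e'" using le le' by simp
  fix i assume i: "i < length e"
  then have "c ! i \<in> set c" "e ! i \<in> set e" "e' ! i \<in> set e'" using lc le le' by simp_all
  then have b: "c ! i < q" "e ! i < q" "e' ! i < q" using sc se se' by blast+
  have "(c ! i + e ! i) mod q = (c ! i + e' ! i) mod q"
    using arg_cong[OF assms(4), of "\<lambda>l. l ! i"] i lc le le' by (simp add: vadd_nth)
  then show "e ! i = e' ! i" using b by (rule mod_add_inj)
qed


definition wA :: "nat \<Rightarrow> nat \<Rightarrow> nat \<Rightarrow> nat list set" where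
  "wA q n j = {xs \<in> words q n. hweight xs = j}"

lemma wA_0: "wA q 0 j = (if j = 0 then {[]} else {})"
  by (auto simp: wA_def words_def hweight_def)

lemma wA_Suc_0: "q > 0 \<Longrightarrow> wA q (Suc n) 0 = (\<lambda>xs. 0 # xs) ` wA q n 0"
  by (auto simp: wA_def words_Suc hweight_Cons split: if_splits)

lemma wA_Suc_Suc: "q > 0 \<Longrightarrow> wA q (Suc n) (Suc j) =
   (\<lambda>xs. 0 # xs) ` wA q n (Suc j) \<union> (\<lambda>(x, xs). x # xs) ` ({1..<q} \<times> wA q n j)"
  by (auto simp: wA_def words_Suc hweight_Cons image_iff split: if_splits)

lemma wA_finite: "finite (wA q n j)"
  unfolding wA_def using words_finite by simp

lemma aux: "(n choose Suc j') * (m::nat) ^ Suc j' + m * ((n choose j') * m ^ j') = (Suc n choose Suc j') * m ^ Suc j'"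
  by (simp only: binomial_Suc_Suc power_Suc) (simp add: algebra_simps)

lemma card_wA: "q > 0 \<Longrightarrow> card (wA q n j) = (n choose j) * (q - 1) ^ j"
proof (induction n arbitrary: j)
  case 0 then show ?case by (simp add: wA_0)
next
  case (Suc n)
  show ?case
  proof (cases j)
    case 0 then show ?thesis using Suc by (simp add: wA_Suc_0 card_image del: One_nat_def)
  next
    case (Suc j')
    have d: "(\<lambda>xs. 0 # xs) ` wA q n (Suc j') \<inter> (\<lambda>(x, xs). x # xs) ` ({1..<q} \<times> wA q n j') = {}"
      by auto
    have i: "inj_on (\<lambda>(x, xs). x # xs) ({1..<q} \<times> wA q n j')" by (auto simp: inj_on_def)
    have "card (wA q (Suc n) j) = card (wA q n (Suc j')) + card ({1..<q} \<times> wA q n j')"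
      unfolding Suc wA_Suc_Suc[OF \<open>q > 0\<close>]
      apply (subst card_Un_disjoint)
      apply (auto simp: wA_finite d)[3]
      apply (subst card_image[OF i])
      apply (subst card_image)
      apply (auto simp: inj_on_def)
      done
    also have "\<dots> = (n choose Suc j') * (q - 1) ^ Suc j' + (q - 1) * ((n choose j') * (q - 1) ^ j')"
      using Suc.IH[OF \<open>q>0\<close>] by (simp add: card_cartesian_product)
    also have "\<dots> = (Suc n choose j) * (q - 1) ^ j"
      unfolding Suc by (rule aux)
    finally show ?thesis .
  qed
qed

lemma hdist_sym: assumes "length xs = length ys" shows "hdist xs ys = hdist ys xs"
proof -
  have "{i. i < length xs \<and> xs ! i \<noteq> ys ! i} = {i. i < length ys \<and> ys ! i \<noteq> xs ! i}"
    using assms by auto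
  then show ?thesis unfolding hdist_def by simp
qed

lemma hdist_vadd': assumes "c \<in> words q n" "e \<in> words q n"
  shows "hdist c (vadd q c e) = hweight e"
  using hdist_vadd[OF assms] assms hdist_sym[of c "vadd q c e"] by (simp add: words_def vadd_def)

definition Bad :: "nat \<Rightarrow> nat \<Rightarrow> nat list set \<Rightarrow> real \<Rightarrow> nat list \<Rightarrow> nat list set" where
  "Bad q n C r c = {e \<in> words q n. real (hweight e) \<le> r \<and> \<not> card (C \<inter> hball q n (vadd q c e) r) \<ge> 2}"

lemma sum_Bad: assumes "C \<subseteq> words q n" "q > 0"
  shows "(\<Sum>c\<in>C. card (Bad q n C r c)) \<le> q ^ n"
proof -
  have fC: "finite C" using assms words_finite finite_subset by blast
  have fB: "\<And>c. finite (Bad q n C r c)" unfolding Bad_def using words_finite by simp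
  have inj: "inj_on (\<lambda>(c, e). vadd q c e) (Sigma C (Bad q n C r))"
  proof (rule inj_onI, clarify)
    fix c e c' e' assume c: "c \<in> C" and e: "e \<in> Bad q n C r c" and c': "c' \<in> C"
      and e': "e' \<in> Bad q n C r c'" and eq: "vadd q c e = vadd q c' e'"
    have cw: "c \<in> words q n" "c' \<in> words q n" using c c' assms by auto
    have ew: "e \<in> words q n" "e' \<in> words q n" using e e' by (auto simp: Bad_def)
    have hw: "real (hweight e) \<le> r" "\<not> card (C \<inter> hball q n (vadd q c e) r) \<ge> 2"
      using e by (simp_all add: Bad_def)
    have hw': "real (hweight e') \<le> r" using e' by (simp add: Bad_def)
    have h1: "c \<in> hball q n (vadd q c e) r"
      unfolding hball_def using cw(1) hw(1) hdist_vadd'[OF cw(1) ew(1)] by simp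
    have h2: "c' \<in> hball q n (vadd q c e) r"
      unfolding hball_def eq using cw(2) hw' hdist_vadd'[OF cw(2) ew(2)] by simp
    have fin: "finite (C \<inter> hball q n (vadd q c e) r)" using fC by simp
    have "c = c'"
    proof (rule ccontr)
      assume ne: "c \<noteq> c'"
      have "{c, c'} \<subseteq> C \<inter> hball q n (vadd q c e) r" using h1 h2 c c' by blast
      then have "card {c, c'} \<le> card (C \<inter> hball q n (vadd q c e) r)" using fin by (rule card_mono[rotated])
      then show False using ne hw(2) by simp
    qed
    then show "c = c' \<and> e = e'" using vadd_cancel[OF cw(1) ew] eq by simp
  qed
  have "(\<Sum>c\<in>C. card (Bad q n C r c)) = card (Sigma C (Bad q n C r))"
    using fC fB by (simp add: card_SigmaI)
  also have "\<dots> = card ((\<lambda>(c, e). vadd q c e) ` Sigma C (Bad q n C r))"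
    using inj by (simp add: card_image)
  also have "\<dots> \<le> card (words q n)"
  proof (rule card_mono[OF words_finite], rule image_subsetI)
    fix x assume "x \<in> Sigma C (Bad q n C r)"
    then obtain c e where x: "x = (c, e)" "c \<in> C" "e \<in> Bad q n C r c" by blast
    have "c \<in> words q n" using x(2) assms(1) by blast
    moreover have "e \<in> words q n" using x(3) unfolding Bad_def by blast
    ultimately show "(\<lambda>(c, e). vadd q c e) x \<in> words q n" using x(1) vadd_words[OF assms(2)] by simp
  qed
  finally show ?thesis by (simp add: words_card)
qed


lemma binom_rec_nat: "Suc j * (n choose Suc j) = (n - j) * (n choose j)"
proof (cases n)
  case 0 then show ?thesis by simp
next
  case (Suc m)
  then show ?thesis using Suc_times_binomial[of j m] binomial_absorb_comp[of n j] by simp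
qed

lemma vol_bound:
  fixes q n :: nat and \<rho> :: real
  assumes q: "q \<ge> 2" and r0: "0 < \<rho>" and r1: "\<rho> < 1 - 1 / real q" and nr: "real n * (1 - \<rho>) \<ge> 1"
  shows "real (card {e\<in>words q n. real (hweight e) \<le> \<rho> * n}) \<ge>
     exp (real n * Hq q \<rho> * ln q) * \<rho> / (2 * (real q - 1) * (1 - \<rho>) * (real n + 1))"
proof -
  have qr: "real q \<ge> 2" using q by simp
  have rq: "\<rho> * real q < real q - 1" using r1 qr by (simp add: field_simps)
  have r1': "\<rho> < 1"
  proof -
    have "1 / real q > 0" using qr by simp
    then show ?thesis using r1 by linarith
  qed
  have n1: "n \<ge> 1" using nr r1' r0 by (cases n) auto
  define k where "k = nat \<lfloor>\<rho> * n\<rfloor>"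
  have kle: "real k \<le> \<rho> * n" using r0 unfolding k_def by (simp add: of_nat_nat)
  have klt: "\<rho> * n < real k + 1"
  proof -
    have "0 \<le> \<rho> * n" using r0 by simp
    then have "real k = of_int \<lfloor>\<rho> * n\<rfloor>" unfolding k_def by simp
    then show ?thesis by linarith
  qed
  have kn: "k < n"
  proof -
    have "\<rho> * real n < 1 * real n" using r1' n1 by (intro mult_strict_right_mono) auto
    then have "real k < real n" using kle by simp
    then show ?thesis by simp
  qed
  define T where "T j = real (n choose j) * \<rho> ^ j * (1 - \<rho>) ^ (n - j)" for j
  have Tnn: "T j \<ge> 0" for j unfolding T_def using r1' r0 by simp
  have sumT: "(\<Sum>j\<le>n. T j) = 1"
    using binomial_ring[of \<rho> "1 - \<rho>" n] unfolding T_def by simp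
  have rec: "T (Suc j) * (real j + 1) * (1 - \<rho>) = T j * (real n - real j) * \<rho>" if "j < n" for j
  proof -
    have "real (Suc j * (n choose Suc j)) = real ((n - j) * (n choose j))" using binom_rec_nat by metis
    then have b: "real (n choose Suc j) * (real j + 1) = real (n choose j) * (real n - real j)"
      using that by (simp add: of_nat_diff algebra_simps)
    have p: "(1 - \<rho>) ^ (n - Suc j) * (1 - \<rho>) = (1 - \<rho>) ^ (n - j)"
      using that by (metis Suc_diff_Suc power_Suc2)
    have "T (Suc j) * (real j + 1) * (1 - \<rho>) = (real (n choose Suc j) * (real j + 1)) * \<rho> ^ j * \<rho> * ((1 - \<rho>) ^ (n - Suc j) * (1 - \<rho>))"
      unfolding T_def by (simp add: algebra_simps)
    also have "\<dots> = T j * (real n - real j) * \<rho>" unfolding b p T_def by (simp add: algebra_simps)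
    finally show ?thesis .
  qed
  have up: "T j \<le> T (Suc j)" if "j < k" for j
  proof -
    have jn: "j < n" using that kn by simp
    have pos: "(real j + 1) * (1 - \<rho>) > 0" using r1' by simp
    have "(real j + 1) * (1 - \<rho>) \<le> (real n - real j) * \<rho>"
    proof -
      have "real j + 1 \<le> real k" using that by simp
      then have "real j + 1 \<le> (real n + 1) * \<rho>" using kle r0 by (simp add: algebra_simps)
      then show ?thesis by (simp add: algebra_simps)
    qed
    then have "T j * ((real j + 1) * (1 - \<rho>)) \<le> T j * ((real n - real j) * \<rho>)"
      using Tnn by (simp add: mult_left_mono)
    also have "\<dots> = T (Suc j) * ((real j + 1) * (1 - \<rho>))" using rec[OF jn] by (simp add: algebra_simps)
    finally have "T j * ((real j + 1) * (1 - \<rho>)) \<le> T (Suc j) * ((real j + 1) * (1 - \<rho>))" .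
    then show ?thesis using pos by (rule mult_right_le_imp_le)
  qed
  have down: "T (Suc j) \<le> T j" if "k < j" "j < n" for j
  proof -
    have pos: "(real j + 1) * (1 - \<rho>) > 0" using r1' by simp
    have "(real n - real j) * \<rho> \<le> (real j + 1) * (1 - \<rho>)"
    proof -
      have "real k + 1 \<le> real j" using that by simp
      then have "(real n + 1) * \<rho> \<le> real j + 1" using klt r1' by (simp add: algebra_simps)
      then show ?thesis by (simp add: algebra_simps)
    qed
    then have "T j * ((real n - real j) * \<rho>) \<le> T j * ((real j + 1) * (1 - \<rho>))"
      using Tnn by (simp add: mult_left_mono)
    moreover have "T j * ((real n - real j) * \<rho>) = T (Suc j) * ((real j + 1) * (1 - \<rho>))"
      using rec[OF that(2)] by (simp add: algebra_simps)
    ultimately have "T (Suc j) * ((real j + 1) * (1 - \<rho>)) \<le> T j * ((real j + 1) * (1 - \<rho>))" by simp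
    then show ?thesis using pos by (rule mult_right_le_imp_le)
  qed
  have kk: "T (Suc k) \<le> 2 * T k"
  proof -
    have pos: "(real k + 1) * (1 - \<rho>) > 0" using r1' by simp
    have "(real n - real k) * \<rho> \<le> 2 * ((real k + 1) * (1 - \<rho>))"
    proof -
      have a0: "(real n - real k) * \<rho> \<le> (real n * (1 - \<rho>) + 1) * \<rho>"
        using klt r0 by (intro mult_right_mono) (auto simp: algebra_simps)
      have a: "(real n - real k) * \<rho> \<le> \<rho> * (real n * (1 - \<rho>)) + \<rho>"
        using a0 by (simp add: algebra_simps)
      have b0: "(\<rho> * real n) * (1 - \<rho>) \<le> (real k + 1) * (1 - \<rho>)"
        using klt r1' by (intro mult_right_mono) auto
      have b: "\<rho> * (real n * (1 - \<rho>)) \<le> (real k + 1) * (1 - \<rho>)"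
        using b0 by (simp only: mult.assoc)
      have c: "\<rho> \<le> \<rho> * (real n * (1 - \<rho>))" using nr r0 by simp
      show ?thesis using a b c by linarith
    qed
    then have "T k * ((real n - real k) * \<rho>) \<le> T k * (2 * ((real k + 1) * (1 - \<rho>)))"
      using Tnn by (simp add: mult_left_mono)
    then have "T k * ((real n - real k) * \<rho>) \<le> (2 * T k) * ((real k + 1) * (1 - \<rho>))"
      by (simp only: mult.assoc mult.left_commute)
    moreover have "T k * ((real n - real k) * \<rho>) = T (Suc k) * ((real k + 1) * (1 - \<rho>))"
      using rec[OF kn] by (simp add: algebra_simps)
    ultimately have "T (Suc k) * ((real k + 1) * (1 - \<rho>)) \<le> (2 * T k) * ((real k + 1) * (1 - \<rho>))"
      by linarith
    then show ?thesis using pos by (rule mult_right_le_imp_le)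
  qed
  have lowpart: "T (k - d) \<le> T k" if "d \<le> k" for d
    using that
  proof (induction d)
    case 0 then show ?case by simp
  next
    case (Suc d)
    have "T (k - Suc d) \<le> T (Suc (k - Suc d))" using Suc.prems by (intro up) simp
    also have "Suc (k - Suc d) = k - d" using Suc.prems by simp
    finally show ?case using Suc by simp
  qed
  have highpart: "T (Suc k + d) \<le> T (Suc k)" if "Suc k + d \<le> n" for d
    using that
  proof (induction d)
    case 0 then show ?case by simp
  next
    case (Suc d)
    have "T (Suc (Suc k + d)) \<le> T (Suc k + d)" using Suc.prems by (intro down) auto
    then show ?case using Suc by simp
  qed
  have allj: "T j \<le> 2 * T k" if "j \<le> n" for j
  proof (cases "j \<le> k")
    case True
    then show ?thesis using lowpart[of "k - j"] Tnn[of k] by simp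
  next
    case False
    then have "T j \<le> T (Suc k)" using highpart[of "j - Suc k"] that by simp
    then show ?thesis using kk by simp
  qed
  have "1 \<le> (\<Sum>j\<le>n. 2 * T k)" unfolding sumT[symmetric] by (rule sum_mono) (use allj in auto)
  then have "1 \<le> (1 + real n) * (2 * T k)" by simp
  then have Tk: "1 \<le> (real n + 1) * (2 * T k)" by (simp only: add.commute)
  have sub: "wA q n k \<subseteq> {e\<in>words q n. real (hweight e) \<le> \<rho> * n}"
    using kle unfolding wA_def by auto
  have "real (card (wA q n k)) \<le> real (card {e\<in>words q n. real (hweight e) \<le> \<rho> * n})"
    using card_mono[OF _ sub] words_finite by simp
  moreover have cw: "real (card (wA q n k)) = real (n choose k) * (real q - 1) ^ k"
    using card_wA[of q n k] q by (simp add: of_nat_diff)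
  ultimately have V: "real (n choose k) * (real q - 1) ^ k \<le> real (card {e\<in>words q n. real (hweight e) \<le> \<rho> * n})"
    by simp
  define L1 where "L1 = ln (real q - 1)"
  define L2 where "L2 = ln (1 - \<rho>)"
  define Lr where "Lr = ln \<rho>"
  have q1: "real q - 1 > 0" using qr by simp
  have r2: "1 - \<rho> > 0" using r1' by simp
  have lnr: "L1 + L2 - Lr > 0"
  proof -
    have "\<rho> < (real q - 1) * (1 - \<rho>)" using rq by (simp add: algebra_simps)
    then have "ln \<rho> < ln ((real q - 1) * (1 - \<rho>))" using r0 by simp
    then show ?thesis unfolding L1_def L2_def Lr_def using q1 r2 by (simp add: ln_mult)
  qed
  define X where "X = (real q - 1) ^ k / (\<rho> ^ k * (1 - \<rho>) ^ (n - k))"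
  have Xpos: "X > 0" unfolding X_def using q1 r0 r2 by simp
  have lnX: "ln X = real k * L1 - real k * Lr - (real n - real k) * L2"
    unfolding X_def L1_def L2_def Lr_def using q1 r0 r2 kn
    by (simp add: ln_div ln_mult ln_realpow of_nat_diff)
  have Hq: "real n * Hq q \<rho> * ln q = real n * (\<rho> * L1 - \<rho> * Lr - (1 - \<rho>) * L2)"
    unfolding Hq_def log_def L1_def L2_def Lr_def using qr by (simp add: field_simps)
  define Y where "Y = real n * Hq q \<rho> * ln q + Lr - L1 - L2"
  have "ln X - Y = (real k - real n * \<rho> + 1) * (L1 + L2 - Lr)"
    unfolding lnX Y_def Hq by (simp add: algebra_simps)
  also have "\<dots> \<ge> 0" using klt lnr by (intro mult_nonneg_nonneg) (auto simp: algebra_simps)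
  finally have "Y \<le> ln X" by simp
  then have "exp Y \<le> exp (ln X)" by (simp only: exp_le_cancel_iff)
  then have "exp Y \<le> X" using Xpos by simp
  moreover have "exp Y = exp (real n * Hq q \<rho> * ln q) * \<rho> / ((real q - 1) * (1 - \<rho>))"
    unfolding Y_def L1_def L2_def Lr_def using q1 r0 r2 by (simp add: exp_add exp_diff)
  ultimately have EX: "exp (real n * Hq q \<rho> * ln q) * \<rho> / ((real q - 1) * (1 - \<rho>)) \<le> X" by simp
  have "1 / (2 * (real n + 1)) \<le> T k" using Tk by (simp add: field_simps)
  then have "X * (1 / (2 * (real n + 1))) \<le> X * T k" using Xpos by (intro mult_left_mono) auto
  also have "X * T k = real (n choose k) * (real q - 1) ^ k"
    unfolding X_def T_def using r0 r2 by (simp add: field_simps)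
  finally have "X / (2 * (real n + 1)) \<le> real (n choose k) * (real q - 1) ^ k" by simp
  moreover have "exp (real n * Hq q \<rho> * ln q) * \<rho> / (2 * (real q - 1) * (1 - \<rho>) * (real n + 1))
      \<le> X / (2 * (real n + 1))"
  proof -
    have "exp (real n * Hq q \<rho> * ln q) * \<rho> / ((real q - 1) * (1 - \<rho>)) / (2 * (real n + 1))
        \<le> X / (2 * (real n + 1))"
      using EX by (intro divide_right_mono) auto
    moreover have eqn: "exp (real n * Hq q \<rho> * ln q) * \<rho> / ((real q - 1) * (1 - \<rho>)) / (2 * (real n + 1))
        = exp (real n * Hq q \<rho> * ln q) * \<rho> / (2 * (real q - 1) * (1 - \<rho>) * (real n + 1))"
      by (simp only: divide_divide_eq_left ac_simps)
    ultimately show ?thesis by (simp only: eqn)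
  qed
  ultimately show ?thesis using V by linarith
qed


lemma expbound:
  fixes a c :: real and n :: nat
  assumes a: "a > 0" and c: "c > 0" and n1: "n \<ge> 1" and nb: "real n \<ge> 8 / (c * a^2)"
  shows "real n + 1 \<le> c * exp (a * real n)"
proof -
  have "exp (a * real n) = exp (a * real n / 2) ^ 2"
    by (simp add: exp_double[symmetric])
  moreover have "a * real n / 2 \<le> exp (a * real n / 2)"
    using exp_ge_add_one_self[of "a * real n / 2"] by linarith
  moreover have "0 \<le> a * real n / 2" using a by simp
  ultimately have e: "(a * real n / 2) ^ 2 \<le> exp (a * real n)" by (metis power_mono)
  have "8 \<le> real n * (c * a^2)" using nb a c by (simp add: field_simps)
  then have "8 * real n \<le> (real n * (c * a^2)) * real n" by (intro mult_right_mono) auto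
  then have "2 * real n \<le> c * (a * real n / 2) ^ 2"
    by (simp add: power2_eq_square algebra_simps)
  also have "\<dots> \<le> c * exp (a * real n)" using e c by simp
  finally show ?thesis using n1 by simp
qed


lemma rate_le1: assumes "C \<subseteq> words q n" "q \<ge> 2" shows "code_rate q n C \<le> 1"
proof (cases "n = 0 \<or> card C = 0")
  case True then show ?thesis by (auto simp: code_rate_def log_def)
next
  case False
  then have c: "card C \<ge> 1" "n > 0" by auto
  have "card C \<le> q ^ n" using card_mono[OF words_finite assms(1)] words_card by metis
  then have "real (card C) \<le> real q ^ n" by (metis of_nat_le_iff of_nat_power)
  then have "log q (card C) \<le> log q (real q ^ n)" using c assms(2) by (subst log_le_cancel_iff) auto
  also have "\<dots> = n" using assms(2) by (simp add: log_nat_power)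
  finally show ?thesis using c by (simp add: code_rate_def)
qed

theorem lemma3p4:
  fixes q :: nat and \<rho> :: real
  assumes "q \<ge> 2" and "0 \<le> \<rho>" and "\<rho> < 1 - 1 / real q"
  shows "\<exists>\<alpha>>0. \<forall>\<gamma>>0. \<exists>N. \<forall>n\<ge>N. \<forall>C.
           C \<subseteq> words q n \<and> code_rate q n C \<ge> 1 - Hq q \<rho> + \<gamma> \<longrightarrow>
           (\<exists>c\<in>C.
              real (card {e \<in> words q n. real (hweight e) \<le> \<rho> * n \<and>
                          card (C \<inter> hball q n (vadd q c e) (\<rho> * n)) \<ge> 2})
              \<ge> (1 - real q powr (- \<alpha> * \<gamma> * real n)) *
                 real (card {e \<in> words q n. real (hweight e) \<le> \<rho> * n}))"
proof (intro exI[of _ "1/2"] conjI allI impI)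
  show "(1/2::real) > 0" by simp
  fix \<gamma> :: real assume g: "\<gamma> > 0"
  have q2: "q \<ge> 2" and qr: "real q \<ge> 2" using assms by auto
  have lq: "ln (real q) > 0" using qr by simp
  show "\<exists>N. \<forall>n\<ge>N. \<forall>C.
           C \<subseteq> words q n \<and> code_rate q n C \<ge> 1 - Hq q \<rho> + \<gamma> \<longrightarrow>
           (\<exists>c\<in>C.
              real (card {e \<in> words q n. real (hweight e) \<le> \<rho> * n \<and>
                          card (C \<inter> hball q n (vadd q c e) (\<rho> * n)) \<ge> 2})
              \<ge> (1 - real q powr (- (1/2) * \<gamma> * real n)) *
                 real (card {e \<in> words q n. real (hweight e) \<le> \<rho> * n}))"
  proof (cases "\<rho> = 0")
    case True
    have "Hq q 0 = 0" by (simp add: Hq_def)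
    show ?thesis
    proof (intro exI[of _ 0] allI impI)
      fix n C assume h: "0 \<le> n" "C \<subseteq> words q n \<and> 1 - Hq q \<rho> + \<gamma> \<le> code_rate q n C"
      then have "1 + \<gamma> \<le> code_rate q n C" using True \<open>Hq q 0 = 0\<close> by simp
      moreover have "code_rate q n C \<le> 1" using rate_le1[OF _ q2] h by simp
      ultimately have False using g by simp
      then show "\<exists>c\<in>C. real (card {e \<in> words q n. real (hweight e) \<le> \<rho> * n \<and>
                          card (C \<inter> hball q n (vadd q c e) (\<rho> * n)) \<ge> 2})
              \<ge> (1 - real q powr (- (1/2) * \<gamma> * real n)) *
                 real (card {e \<in> words q n. real (hweight e) \<le> \<rho> * n})" ..
    qed
  next
    case False
    then have r0: "\<rho> > 0" using assms by simp
    have r1': "\<rho> < 1"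
    proof -
      have "1 / real q > 0" using qr by simp
      then show ?thesis using assms(3) by linarith
    qed
    define c0 where "c0 = \<rho> / (2 * (real q - 1) * (1 - \<rho>))"
    define a where "a = \<gamma> * ln (real q) / 2"
    have c0: "c0 > 0" unfolding c0_def using r0 r1' qr by simp
    have a: "a > 0" unfolding a_def using g lq by simp
    define N where "N = max 1 (max (nat \<lceil>8 / (c0 * a^2)\<rceil>) (nat \<lceil>1 / (1 - \<rho>)\<rceil>))"
    show ?thesis
    proof (intro exI[of _ N] allI impI)
      fix n C assume nN: "N \<le> n" and hC: "C \<subseteq> words q n \<and> 1 - Hq q \<rho> + \<gamma> \<le> code_rate q n C"
      have n1: "n \<ge> 1" using nN unfolding N_def by simp
      have nb: "real n \<ge> 8 / (c0 * a^2)"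
      proof -
        have "nat \<lceil>8 / (c0 * a^2)\<rceil> \<le> n" using nN unfolding N_def by simp
        then have "real (nat \<lceil>8 / (c0 * a^2)\<rceil>) \<le> real n" by (simp only: of_nat_le_iff)
        then show ?thesis using real_nat_ceiling_ge[of "8 / (c0 * a^2)"] by linarith
      qed
      have nr0: "real n \<ge> 1 / (1 - \<rho>)"
      proof -
        have "nat \<lceil>1 / (1 - \<rho>)\<rceil> \<le> n" using nN unfolding N_def by simp
        then have "real (nat \<lceil>1 / (1 - \<rho>)\<rceil>) \<le> real n" by (simp only: of_nat_le_iff)
        then show ?thesis using real_nat_ceiling_ge[of "1 / (1 - \<rho>)"] by linarith
      qed
      have nr: "real n * (1 - \<rho>) \<ge> 1" using nr0 r1' by (simp add: field_simps)
      define E where "E = exp (a * real n)"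
      have EB: "real n + 1 \<le> c0 * E" unfolding E_def using expbound[OF a c0 n1 nb] .
      have E1: "E \<ge> 1" unfolding E_def using a by simp
      define B where "B = {e \<in> words q n. real (hweight e) \<le> \<rho> * n}"
      define H where "H = Hq q \<rho>"
      have fB: "finite B" unfolding B_def using words_finite by simp
      have VB: "real (card B) \<ge> exp (real n * H * ln q) * c0 / (real n + 1)"
        using vol_bound[OF q2 r0 assms(3) nr] unfolding B_def H_def c0_def by (simp add: field_simps)
      have qn: "real q ^ n = exp (real n * ln q)" using qr by (simp add: exp_of_nat_mult)
      have Bq: "real (card B) \<le> real q ^ n"
      proof -
        have "card B \<le> q ^ n" unfolding B_def using card_mono[OF words_finite] words_card
          by (metis (no_types, lifting) mem_Collect_eq subsetI)
        then show ?thesis by (metis of_nat_le_iff of_nat_power)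
      qed
      have npos: "real n > 0" using n1 by simp
      have rate: "(1 - H + \<gamma>) * real n * ln q \<le> ln (real (card C))"
        using hC npos lq unfolding code_rate_def log_def H_def by (simp add: field_simps)
      have delta: "real q powr (- (1/2) * \<gamma> * real n) = exp (- (a * real n))"
        unfolding a_def powr_def using qr by (simp add: algebra_simps)
      show "\<exists>c\<in>C. real (card {e \<in> words q n. real (hweight e) \<le> \<rho> * n \<and>
                          card (C \<inter> hball q n (vadd q c e) (\<rho> * n)) \<ge> 2})
              \<ge> (1 - real q powr (- (1/2) * \<gamma> * real n)) *
                 real (card {e \<in> words q n. real (hweight e) \<le> \<rho> * n})"
      proof (rule ccontr)
        assume nc: "\<not> ?thesis"
        show False
        proof (cases "C = {}")
          case True
          then have "1 - H + \<gamma> \<le> 0" using rate npos lq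
            by (simp add: mult_le_0_iff zero_le_mult_iff)
          then have "(1 + \<gamma>) * (real n * ln q) \<le> H * (real n * ln q)" using npos lq
            by (intro mult_right_mono) auto
          then have "real n * ln q * (1 + \<gamma>) \<le> real n * H * ln q" by (simp add: algebra_simps)
          then have "exp (real n * ln q) * exp (real n * \<gamma> * ln q) \<le> exp (real n * H * ln q)"
            by (simp add: exp_add[symmetric] algebra_simps)
          moreover have "exp (real n * \<gamma> * ln q) = E * E" unfolding E_def a_def
            by (simp add: exp_add[symmetric])
          ultimately have "real q ^ n * E * E \<le> exp (real n * H * ln q)" using qn by (simp add: mult.assoc)
          then have "real q ^ n * E * E * c0 / (real n + 1) \<le> real (card B)"
          proof -
            have "real q ^ n * E * E * c0 / (real n + 1) \<le> exp (real n * H * ln q) * c0 / (real n + 1)"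
              using \<open>real q ^ n * E * E \<le> exp (real n * H * ln q)\<close> c0 npos
              by (intro divide_right_mono mult_right_mono) auto
            then show ?thesis using VB by linarith
          qed
          moreover have "real q ^ n * E \<le> real q ^ n * E * E * c0 / (real n + 1)"
          proof -
            have "real q ^ n * E * (real n + 1) \<le> real q ^ n * E * (c0 * E)"
              using EB E1 qr by (intro mult_left_mono) auto
            then show ?thesis using npos by (simp add: field_simps)
          qed
          moreover have "real q ^ n < real q ^ n * E"
          proof -
            have "E > 1" unfolding E_def using a npos by simp
            then show ?thesis using qr by simp
          qed
          ultimately show False using Bq by linarith
        next
          case False
          have fC: "finite C" using hC words_finite finite_subset by blast
          have Cpos: "real (card C) > 0" using False fC by (simp add: card_gt_0_iff)
          define \<delta> where "\<delta> = exp (- (a * real n))"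
          have badc: "real (card (Bad q n C (\<rho> * n) c)) > \<delta> * real (card B)" if c: "c \<in> C" for c
          proof -
            let ?G = "{e \<in> words q n. real (hweight e) \<le> \<rho> * n \<and>
                          card (C \<inter> hball q n (vadd q c e) (\<rho> * n)) \<ge> 2}"
            have "\<not> ((1 - real q powr (- (1/2) * \<gamma> * real n)) * real (card B) \<le> real (card ?G))"
              using nc c unfolding B_def by blast
            then have "real (card ?G) < (1 - \<delta>) * real (card B)"
              unfolding delta \<delta>_def[symmetric] by linarith
            moreover have BU: "B = ?G \<union> Bad q n C (\<rho> * n) c" and dj: "?G \<inter> Bad q n C (\<rho> * n) c = {}"
              unfolding B_def Bad_def by blast+
            moreover have f1: "finite ?G" and f2: "finite (Bad q n C (\<rho> * n) c)"
              using words_finite unfolding Bad_def by simp_all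
            moreover have "card B = card ?G + card (Bad q n C (\<rho> * n) c)"
              unfolding BU using card_Un_disjoint[OF f1 f2 dj] .
            ultimately have "real (card B) = real (card ?G) + real (card (Bad q n C (\<rho> * n) c))"
              by simp
            then show ?thesis using \<open>real (card ?G) < (1 - \<delta>) * real (card B)\<close> by (simp add: algebra_simps)
          qed
          have "(\<Sum>c\<in>C. \<delta> * real (card B)) < (\<Sum>c\<in>C. real (card (Bad q n C (\<rho> * n) c)))"
            using fC False badc by (intro sum_strict_mono) auto
          also have "\<dots> \<le> real q ^ n"
          proof -
            have sb: "(\<Sum>c\<in>C. card (Bad q n C (\<rho> * n) c)) \<le> q ^ n"
              using sum_Bad[of C q n "\<rho> * n"] hC q2 by simp
            then have "real (\<Sum>c\<in>C. card (Bad q n C (\<rho> * n) c)) \<le> real (q ^ n)"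
              by (simp only: of_nat_le_iff)
            then show ?thesis by simp
          qed
          finally have S: "real (card C) * \<delta> * real (card B) < real q ^ n" by simp
          have Cb: "exp ((1 - H + \<gamma>) * real n * ln q) \<le> real (card C)"
          proof -
            have "exp ((1 - H + \<gamma>) * real n * ln q) \<le> exp (ln (real (card C)))"
              using rate by (simp only: exp_le_cancel_iff)
            also have "\<dots> = real (card C)" using Cpos by (rule exp_ln)
            finally show ?thesis .
          qed
          define B1 where "B1 = exp (real n * H * ln q) * c0 / (real n + 1)"
          have B1: "B1 \<ge> 0" unfolding B1_def using c0 npos by simp
          have dpos: "\<delta> \<ge> 0" unfolding \<delta>_def by simp
          have "exp ((1 - H + \<gamma>) * real n * ln q) * \<delta> * B1 \<le> real (card C) * \<delta> * B1"
            using Cb dpos B1 by (intro mult_right_mono) auto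
          also have "\<dots> \<le> real (card C) * \<delta> * real (card B)"
            using VB dpos unfolding B1_def by (intro mult_left_mono) auto
          finally have L: "exp ((1 - H + \<gamma>) * real n * ln q) * \<delta> * B1 \<le> real (card C) * \<delta> * real (card B)" .
          have eq1: "exp ((1 - H + \<gamma>) * real n * ln q) * \<delta> * exp (real n * H * ln q) = real q ^ n * E"
            unfolding qn \<delta>_def E_def a_def by (simp add: exp_add[symmetric] exp_diff[symmetric] algebra_simps)
          have "exp ((1 - H + \<gamma>) * real n * ln q) * \<delta> * B1
                = (exp ((1 - H + \<gamma>) * real n * ln q) * \<delta> * exp (real n * H * ln q)) * (c0 / (real n + 1))"
            unfolding B1_def by (simp add: algebra_simps)
          then have eq2: "exp ((1 - H + \<gamma>) * real n * ln q) * \<delta> * B1 = real q ^ n * (E * (c0 / (real n + 1)))"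
            unfolding eq1 by (simp add: algebra_simps)
          have ge: "real q ^ n * (E * (c0 / (real n + 1))) \<ge> real q ^ n"
          proof -
            have "real n + 1 \<le> E * c0" using EB by (simp add: mult.commute)
            then have "1 \<le> E * c0 / (real n + 1)" using npos by (simp add: le_divide_eq)
            then have "1 \<le> E * (c0 / (real n + 1))" by simp
            then have "real q ^ n * 1 \<le> real q ^ n * (E * (c0 / (real n + 1)))"
              by (intro mult_left_mono) auto
            then show ?thesis by simp
          qed
          show False using S L eq2 ge by linarith
        qed
      qed
    qed
  qed
qed

end
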